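(* Let $t\in[0,1)$, $\tilde r,\tilde c\in\tilde\Delta_n$ with strictly positive entries, and $\tilde P_\circ\in\mathbb{R}^{n\times n}_{\ge0}$. (a) If every row of $\tilde P_\circ$ is nonzero, the row projection $\min\{D_t(\tilde P\|\tilde P_\circ):\tilde P\in\mathbb{R}^{n\times n}_{\ge0},\ \tilde P^{1/t^*}\mathbf 1_n=\tilde r^{1/t^*}\}$ is attained at $$\tilde P=\mathrm{diag}(\tilde r/\tilde\mu)\,\tilde P_\circ,\qquad \tilde\mu=\big(\tilde P_\circ^{1/t^*}\mathbf 1_n\big)^{t^*}.$$ (b) If every column of $\tilde P_\circ$ is nonzero, the column projection $\min\{D_t(\tilde P\|\tilde P_\circ):\tilde P\in\mathbb{R}^{n\times n}_{\ge0},\ (\tilde P^{1/t^*})^\top\mathbf 1_n=\tilde c^{1/t^*}\}$ is attained at $$\tilde P=\tilde P_\circ\,\mathrm{diag}(\tilde c/\tilde\xi),\qquad \tilde\xi=\big((\tilde P_\circ^{1/t^*})^\top\mathbf 1_n\big)^{t^*}.$$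
   Context: $t^*=1/(2-t)$; all powers and the division $\tilde r/\tilde\mu$ are entrywise; $\mathbf 1_n$ is the all-ones vector. For $s\ne1$, $\log_s(z)=(z^{1-s}-1)/(1-s)$. Co-simplex $\tilde\Delta_n=\{\tilde p\in\mathbb{R}^n:\tilde p\ge0,\ \sum_i\tilde p_i^{1/t^*}=1\}$. Tempered relative entropy $D_t(\tilde u\|\tilde v)=\sum_k[\tilde u_k(\log_t\tilde u_k-\log_t\tilde v_k)-\log_{t-1}\tilde u_k+\log_{t-1}\tilde v_k]$ (sum over all entries). *)

theory Defs
  imports "HOL-Analysis.Analysis"
begin

definition tstar :: "real \<Rightarrow> real" where
  "tstar t = 1 / (2 - t)"

definition logt :: "real \<Rightarrow> real \<Rightarrow> real" where
  "logt s z = (z powr (1 - s) - 1) / (1 - s)"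

definition vpow :: "real^'n \<Rightarrow> real \<Rightarrow> real^'n" where
  "vpow v a = (\<chi> i. (v $ i) powr a)"

definition mpow :: "real^'n^'m \<Rightarrow> real \<Rightarrow> real^'n^'m" where
  "mpow P a = (\<chi> i j. (P $ i $ j) powr a)"

definition ones :: "real^'n" where
  "ones = (\<chi> i. 1)"

definition diagm :: "real^'n \<Rightarrow> real^'n^'n" where
  "diagm v = (\<chi> i j. if i = j then v $ i else 0)"

definition vdiv :: "real^'n \<Rightarrow> real^'n \<Rightarrow> real^'n" where
  "vdiv u v = (\<chi> i. u $ i / v $ i)"

definition nonneg_mat :: "real^'n^'m \<Rightarrow> bool" where
  "nonneg_mat P \<longleftrightarrow> (\<forall>i j. P $ i $ j \<ge> 0)"

definition cosimplex :: "real \<Rightarrow> (real^'n) set" where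
  "cosimplex t = {p. (\<forall>i. p $ i \<ge> 0) \<and> (\<Sum>i\<in>UNIV. (p $ i) powr (1 / tstar t)) = 1}"

definition Dt :: "real \<Rightarrow> real^'n^'m \<Rightarrow> real^'n^'m \<Rightarrow> real" where
  "Dt t U V = (\<Sum>i\<in>UNIV. \<Sum>j\<in>UNIV.
      U $ i $ j * (logt t (U $ i $ j) - logt t (V $ i $ j))
      - logt (t - 1) (U $ i $ j) + logt (t - 1) (V $ i $ j))"

end

theory Submission imports Defs begin

lemma holder_row:
  fixes u v :: "'a::finite \<Rightarrow> real"
  assumes s: "s > 0" and q: "q = 1 + s"
    and u: "\<And>j. u j \<ge> 0" and v: "\<And>j. v j \<ge> 0"
    and R: "R \<ge> 0" and M: "M > 0"
    and su: "(\<Sum>j\<in>UNIV. u j powr q) = R powr q"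
    and sv: "(\<Sum>j\<in>UNIV. v j powr q) = M powr q"
  shows "(\<Sum>j\<in>UNIV. u j * v j powr s) \<le> R * M powr s"
proof (cases "R = 0")
  case True
  then have "\<forall>j\<in>UNIV. u j powr q = 0"
    using su q s u by (subst sum_nonneg_eq_0_iff[symmetric]) auto
  then have "\<And>j. u j = 0" by simp
  then show ?thesis using True by simp
next
  case False
  then have Rp: "R > 0" using R by simp
  define p where "p = q / s"
  have p1: "p > 1" using s q by (simp add: p_def)
  have q1: "q > 1" using s q by simp
  have pq: "1/q + 1/p = 1" using s q by (simp add: p_def field_simps)
  have Y: "(u j / R) * (v j powr s / M powr s) \<le> (u j / R) powr q / q + (v j powr s / M powr s) powr p / p" for j
    by (rule Youngs_inequality) (use q1 p1 pq u v Rp M in auto)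
  have e1: "(u j / R) powr q = u j powr q / R powr q" for j
    using u Rp by (simp add: powr_divide)
  have e2: "(v j powr s / M powr s) powr p = v j powr q / M powr q" for j
    using v M s by (simp add: powr_divide powr_powr p_def)
  have "(\<Sum>j\<in>UNIV. (u j / R) * (v j powr s / M powr s))
      \<le> (\<Sum>j\<in>UNIV. u j powr q / R powr q / q + v j powr q / M powr q / p)"
    by (rule sum_mono) (use Y e1 e2 in simp)
  also have "\<dots> = (\<Sum>j\<in>UNIV. u j powr q) / R powr q / q + (\<Sum>j\<in>UNIV. v j powr q) / M powr q / p"
    by (simp add: sum.distrib sum_divide_distrib)
  also have "\<dots> = 1" using su sv Rp M pq by simp
  finally have "(\<Sum>j\<in>UNIV. u j * v j powr s) / (R * M powr s) \<le> 1"
    by (simp add: sum_divide_distrib field_simps)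
  then show ?thesis using Rp M by (simp add: divide_le_eq)
qed

lemma entry_eq:
  assumes "t < 1" "u \<ge> 0" "v \<ge> 0"
  shows "u * (logt t u - logt t v) - logt (t - 1) u + logt (t - 1) v
    = u powr (2 - t) / ((1 - t) * (2 - t)) - u * v powr (1 - t) / (1 - t) + v powr (2 - t) / (2 - t)"
proof -
  have uu: "u * u powr (1 - t) = u powr (2 - t)"
    using assms by (cases "u = 0") (auto simp: powr_add[symmetric] powr_mult_base)
  have e: "1 - (t - 1) = 2 - t" by simp
  have n1: "1 - t \<noteq> 0" "2 - t \<noteq> 0" using assms by auto
  define a where "a = u powr (2 - t)"
  define b where "b = v powr (2 - t)"
  define c where "c = v powr (1 - t)"
  define d where "d = u powr (1 - t)"
  have uu': "u * d = a" using uu by (simp add: a_def d_def)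
  have "u * (logt t u - logt t v) - logt (t - 1) u + logt (t - 1) v
     = u * ((d - 1) / (1 - t) - (c - 1) / (1 - t)) - (a - 1) / (2 - t) + (b - 1) / (2 - t)"
    unfolding logt_def e a_def b_def c_def d_def by simp
  also have "\<dots> = a / ((1 - t) * (2 - t)) - u * c / (1 - t) + b / (2 - t)"
  proof -
    have g: "\<And>K L. K \<noteq> 0 \<Longrightarrow> L \<noteq> 0 \<Longrightarrow> L - K = 1 \<Longrightarrow>
       u * ((d - 1) / K - (c - 1) / K) - (a - 1) / L + (b - 1) / L = a / (K * L) - u * c / K + b / L"
    proof -
      fix K L :: real assume h: "K \<noteq> 0" "L \<noteq> 0" "L - K = 1"
      have "(u * ((d - 1) / K - (c - 1) / K) - (a - 1) / L + (b - 1) / L) * (K * L)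
         = u * d * L - u * c * L - (a - 1) * K + (b - 1) * K"
        using h(1,2) by (simp add: field_simps)
      also have "\<dots> = a * (L - K) - u * c * L + b * K" using uu' by (simp add: algebra_simps)
      also have "\<dots> = a - u * c * L + b * K" using h(3) by simp
      also have "\<dots> = (a / (K * L) - u * c / K + b / L) * (K * L)"
        using h(1,2) by (simp add: field_simps)
      finally show "u * ((d - 1) / K - (c - 1) / K) - (a - 1) / L + (b - 1) / L = a / (K * L) - u * c / K + b / L"
        using h by simp
    qed
    show ?thesis by (rule g) (use n1 in auto)
  qed
  finally show ?thesis by (simp add: a_def b_def c_def)
qed

lemma Dt_eq:
  fixes U V :: "real^'n^'m"
  assumes "t < 1" "nonneg_mat U" "nonneg_mat V"
  shows "Dt t U V = (\<Sum>i\<in>UNIV. (\<Sum>j\<in>UNIV. U$i$j powr (2-t)) / ((1 - t) * (2 - t))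
      - (\<Sum>j\<in>UNIV. U$i$j * V$i$j powr (1-t)) / (1 - t) + (\<Sum>j\<in>UNIV. V$i$j powr (2-t)) / (2 - t))"
  unfolding Dt_def using assms
  by (simp add: entry_eq nonneg_mat_def sum.distrib sum_subtractf sum_divide_distrib)

lemma diagm_mult: "(diagm d ** A) $ i $ j = d $ i * A $ i $ j"
  by (simp add: diagm_def matrix_matrix_mult_def if_distrib[of "\<lambda>x. x * _"] cong: if_cong)

lemma mpow_ones: "(mpow P a *v ones) $ i = (\<Sum>j\<in>UNIV. P $ i $ j powr a)"
  by (simp add: mpow_def ones_def matrix_vector_mult_def)

lemma vv: "(v::real) \<ge> 0 \<Longrightarrow> t < 1 \<Longrightarrow> v * v powr (1 - t) = v powr (2 - t)"
  by (cases "v = 0") (auto simp: powr_add[symmetric] powr_mult_base)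

lemma partA:
  fixes t :: real and r :: "real^'n" and P0 :: "real^'n^'n"
  assumes t: "0 \<le> t" "t < 1" and r: "\<forall>i. r $ i > 0" and P0: "nonneg_mat P0"
    and rows: "\<forall>i. \<exists>j. P0 $ i $ j \<noteq> 0"
  shows "let mu = vpow (mpow P0 (1 / tstar t) *v ones) (tstar t);
           Ph = diagm (vdiv r mu) ** P0
       in nonneg_mat Ph \<and> mpow Ph (1 / tstar t) *v ones = vpow r (1 / tstar t) \<and>
          (\<forall>P. nonneg_mat P \<and> mpow P (1 / tstar t) *v ones = vpow r (1 / tstar t)
               \<longrightarrow> Dt t Ph P0 \<le> Dt t P P0)"
proof -
  have q: "1 / tstar t = 2 - t" "tstar t = 1 / (2 - t)" by (simp_all add: tstar_def)
  define M where "M i = (\<Sum>j\<in>UNIV. P0 $ i $ j powr (2 - t))" for i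
  define mu where "mu = vpow (mpow P0 (1 / tstar t) *v ones) (tstar t)"
  define Ph where "Ph = diagm (vdiv r mu) ** P0"
  have P0nn: "\<And>i j. P0 $ i $ j \<ge> 0" using P0 by (simp add: nonneg_mat_def)
  have Mpos: "M i > 0" for i
  proof -
    obtain j where j: "P0 $ i $ j \<noteq> 0" using rows by blast
    then have "P0 $ i $ j powr (2 - t) > 0" using P0nn[of i j] by simp
    then show ?thesis unfolding M_def
      by (intro sum_pos2[where i = j]) auto
  qed
  have mu_i: "mu $ i = M i powr (1 / (2 - t))" for i
    by (simp add: mu_def vpow_def mpow_ones q M_def)
  have mupos: "mu $ i > 0" for i using Mpos[of i] mu_i[of i] by simp
  have muq: "mu $ i powr (2 - t) = M i" for i
    using Mpos[of i] t by (simp add: mu_i powr_powr)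
  have Ph_ij: "Ph $ i $ j = r $ i / mu $ i * P0 $ i $ j" for i j
    by (simp add: Ph_def diagm_mult vdiv_def)
  have Phnn: "nonneg_mat Ph"
    unfolding nonneg_mat_def Ph_ij using r mupos P0nn
    by (metis divide_nonneg_pos less_imp_le mult_nonneg_nonneg)
  have Phrow: "(\<Sum>j\<in>UNIV. Ph $ i $ j powr (2 - t)) = r $ i powr (2 - t)" for i
  proof -
    have "(\<Sum>j\<in>UNIV. Ph $ i $ j powr (2 - t)) = (\<Sum>j\<in>UNIV. (r $ i / mu $ i) powr (2 - t) * P0 $ i $ j powr (2 - t))"
      unfolding Ph_ij
    proof (intro sum.cong refl)
      fix j
      have "0 \<le> r $ i / mu $ i" using r mupos[of i] by (simp add: less_imp_le)
      then show "(r $ i / mu $ i * P0 $ i $ j) powr (2 - t) = (r $ i / mu $ i) powr (2 - t) * P0 $ i $ j powr (2 - t)"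
        by (simp only: powr_mult)
    qed
    also have "\<dots> = (r $ i / mu $ i) powr (2 - t) * M i"
      by (simp add: M_def sum_distrib_left)
    also have "\<dots> = r $ i powr (2 - t)"
      using r mupos muq[of i] Mpos[of i] by (simp add: powr_divide less_imp_le)
    finally show ?thesis .
  qed
  have Phcons: "mpow Ph (1 / tstar t) *v ones = vpow r (1 / tstar t)"
    by (simp add: vec_eq_iff mpow_ones vpow_def q Phrow)
  have Phcross: "(\<Sum>j\<in>UNIV. Ph $ i $ j * P0 $ i $ j powr (1 - t)) = r $ i * mu $ i powr (1 - t)" for i
  proof -
    have "(\<Sum>j\<in>UNIV. Ph $ i $ j * P0 $ i $ j powr (1 - t)) = (\<Sum>j\<in>UNIV. r $ i / mu $ i * P0 $ i $ j powr (2 - t))"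
      unfolding Ph_ij using vv[OF P0nn t(2)] by (intro sum.cong refl) (simp add: mult.assoc)
    also have "\<dots> = r $ i / mu $ i * mu $ i powr (2 - t)"
      by (simp add: M_def sum_distrib_left muq)
    also have "mu $ i powr (2 - t) = mu $ i * mu $ i powr (1 - t)"
      using vv[of "mu $ i" t] mupos[of i] t by simp
    finally show ?thesis using mupos[of i] by simp
  qed
  have opt: "Dt t Ph P0 \<le> Dt t P P0"
    if Pnn: "nonneg_mat P" and Pc: "mpow P (1 / tstar t) *v ones = vpow r (1 / tstar t)" for P
  proof -
    have Prow: "(\<Sum>j\<in>UNIV. P $ i $ j powr (2 - t)) = r $ i powr (2 - t)" for i
      using Pc by (simp add: vec_eq_iff mpow_ones vpow_def q)
    have cross: "(\<Sum>j\<in>UNIV. P $ i $ j * P0 $ i $ j powr (1 - t)) \<le> (\<Sum>j\<in>UNIV. Ph $ i $ j * P0 $ i $ j powr (1 - t))" for i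
      unfolding Phcross
      by (rule holder_row[where q = "2 - t"]) (use t Pnn P0nn r mupos Prow muq M_def in \<open>auto simp: nonneg_mat_def less_imp_le\<close>)
    show ?thesis
      unfolding Dt_eq[OF t(2) Phnn P0] Dt_eq[OF t(2) Pnn P0] Phrow Prow
      by (rule sum_mono) (use cross t in \<open>auto intro!: divide_right_mono\<close>)
  qed
  show ?thesis unfolding Let_def mu_def[symmetric] Ph_def[symmetric]
    using Phnn Phcons opt by blast
qed

lemma transpose_mpow: "transpose (mpow P a) = mpow (transpose P) a"
  by (simp add: vec_eq_iff transpose_def mpow_def)

lemma nonneg_transpose: "nonneg_mat (transpose P) = nonneg_mat P"
  by (auto simp: nonneg_mat_def transpose_def)

lemma Dt_transpose: "Dt t (transpose U) (transpose V) = Dt t U V"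
  unfolding Dt_def transpose_def by (simp, rule sum.swap)

lemma transpose_diagm: "transpose (diagm d) = diagm d"
  by (simp add: vec_eq_iff transpose_def diagm_def)

lemma partB:
  fixes t :: real and c :: "real^'n" and P0 :: "real^'n^'n"
  assumes t: "0 \<le> t" "t < 1" and c: "\<forall>i. c $ i > 0" and P0: "nonneg_mat P0"
    and cols: "\<forall>j. \<exists>i. P0 $ i $ j \<noteq> 0"
  shows "let xi = vpow (transpose (mpow P0 (1 / tstar t)) *v ones) (tstar t);
           Ph = P0 ** diagm (vdiv c xi)
       in nonneg_mat Ph \<and> transpose (mpow Ph (1 / tstar t)) *v ones = vpow c (1 / tstar t) \<and>
          (\<forall>P. nonneg_mat P \<and> transpose (mpow P (1 / tstar t)) *v ones = vpow c (1 / tstar t)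
               \<longrightarrow> Dt t Ph P0 \<le> Dt t P P0)"
proof -
  have rows: "\<forall>i. \<exists>j. transpose P0 $ i $ j \<noteq> 0" using cols by (simp add: transpose_def)
  note A = partA[OF t c, of "transpose P0", unfolded nonneg_transpose, OF P0 rows]
  define xi where "xi = vpow (transpose (mpow P0 (1 / tstar t)) *v ones) (tstar t)"
  define Q where "Q = diagm (vdiv c xi) ** transpose P0"
  have xi: "xi = vpow (mpow (transpose P0) (1 / tstar t) *v ones) (tstar t)"
    by (simp add: xi_def transpose_mpow)
  have PhQ: "P0 ** diagm (vdiv c xi) = transpose Q"
    by (simp add: Q_def matrix_transpose_mul transpose_diagm)
  from A have Q1: "nonneg_mat Q" and Q2: "mpow Q (1 / tstar t) *v ones = vpow c (1 / tstar t)"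
    and Q3: "\<And>P. nonneg_mat P \<Longrightarrow> mpow P (1 / tstar t) *v ones = vpow c (1 / tstar t)
               \<Longrightarrow> Dt t Q (transpose P0) \<le> Dt t P (transpose P0)"
    unfolding Let_def xi[symmetric] Q_def[symmetric] by blast+
  show ?thesis
    unfolding Let_def xi_def[symmetric] PhQ
  proof (intro conjI allI impI)
    show "nonneg_mat (transpose Q)" using Q1 by (simp add: nonneg_transpose)
    show "transpose (mpow (transpose Q) (1 / tstar t)) *v ones = vpow c (1 / tstar t)"
      using Q2 by (simp add: transpose_mpow)
    fix P :: "real^'n^'n" assume "nonneg_mat P \<and> transpose (mpow P (1 / tstar t)) *v ones = vpow c (1 / tstar t)"
    then have "nonneg_mat (transpose P)" "mpow (transpose P) (1 / tstar t) *v ones = vpow c (1 / tstar t)"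
      by (simp_all add: nonneg_transpose transpose_mpow)
    from Q3[OF this] show "Dt t (transpose Q) P0 \<le> Dt t P P0"
      using Dt_transpose[of t Q "transpose P0"] Dt_transpose[of t "transpose P" "transpose P0"]
      by simp
  qed
qed


theorem theorem4:
  fixes t :: real and r c :: "real^'n" and P0 :: "real^'n^'n"
  assumes t: "0 \<le> t" "t < 1"
    and r: "r \<in> cosimplex t" "\<forall>i. r $ i > 0"
    and c: "c \<in> cosimplex t" "\<forall>i. c $ i > 0"
    and P0: "nonneg_mat P0"
  shows
   "((\<forall>i. \<exists>j. P0 $ i $ j \<noteq> 0) \<longrightarrow>
      (let mu = vpow (mpow P0 (1 / tstar t) *v ones) (tstar t);
           Ph = diagm (vdiv r mu) ** P0
       in nonneg_mat Ph \<and> mpow Ph (1 / tstar t) *v ones = vpow r (1 / tstar t) \<and>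
          (\<forall>P. nonneg_mat P \<and> mpow P (1 / tstar t) *v ones = vpow r (1 / tstar t)
               \<longrightarrow> Dt t Ph P0 \<le> Dt t P P0)))
    \<and>
    ((\<forall>j. \<exists>i. P0 $ i $ j \<noteq> 0) \<longrightarrow>
      (let xi = vpow (transpose (mpow P0 (1 / tstar t)) *v ones) (tstar t);
           Ph = P0 ** diagm (vdiv c xi)
       in nonneg_mat Ph \<and> transpose (mpow Ph (1 / tstar t)) *v ones = vpow c (1 / tstar t) \<and>
          (\<forall>P. nonneg_mat P \<and> transpose (mpow P (1 / tstar t)) *v ones = vpow c (1 / tstar t)
               \<longrightarrow> Dt t Ph P0 \<le> Dt t P P0)))"
  using partA[OF t(1,2) r(2) P0] partB[OF t(1,2) c(2) P0] by blast

end
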